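(* For all integers $\ell\ge1$ and $N\ge2$ there exists an $(N,\ell)$-isolating family of size at most $2^\ell\log_2 N$.
   Context: For $m\in[N]=\{1,\dots,N\}$ and $S\subseteq[N]\setminus\{m\}$, a function $h:[N]\to\{0,1\}^\ell$ isolates $m$ from $S$ if $h(m)\notin\{h(m'):m'\in S\}$. A family $\{h_1,\dots,h_M\}$ of functions $[N]\to\{0,1\}^\ell$ is $(N,\ell)$-isolating if for every $S\subseteq[N]$ with $|S|\le 2^{\ell-1}$ and every $m\in[N]\setminus S$ there is $j\in[M]$ such that $h_j$ isolates $m$ from $S$. *)

theory Defs
  imports Complex_Main
begin

text \<open>[N] = {1..N}; {0,1}^l is represented by boolean lists of length l.
  A function [N] -> {0,1}^l is a function nat => bool list whose values on {1..N}
  have length l (values outside [N] are irrelevant).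
  A family {h_1,...,h_M} is an indexed family H :: nat => (nat => bool list), j in {1..M}.\<close>

definition isolates :: "(nat \<Rightarrow> bool list) \<Rightarrow> nat \<Rightarrow> nat set \<Rightarrow> bool" where
  "isolates h m S \<longleftrightarrow> h m \<notin> {h m' | m'. m' \<in> S}"

definition is_hash_fun :: "nat \<Rightarrow> nat \<Rightarrow> (nat \<Rightarrow> bool list) \<Rightarrow> bool" where
  "is_hash_fun N l h \<longleftrightarrow> (\<forall>x\<in>{1..N}. length (h x) = l)"

definition isolating_family :: "nat \<Rightarrow> nat \<Rightarrow> nat \<Rightarrow> (nat \<Rightarrow> nat \<Rightarrow> bool list) \<Rightarrow> bool" where
  "isolating_family N l M H \<longleftrightarrow>
     (\<forall>j\<in>{1..M}. is_hash_fun N l (H j)) \<and>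
     (\<forall>S. S \<subseteq> {1..N} \<longrightarrow> card S \<le> 2 ^ (l - 1) \<longrightarrow>
        (\<forall>m \<in> {1..N} - S. \<exists>j\<in>{1..M}. isolates (H j) m S))"

end

theory Submission
  imports Defs "HOL-Library.FuncSet"
begin

definition LL :: "nat \<Rightarrow> bool list set" where "LL l = {xs. length xs = l}"
definition FF :: "nat \<Rightarrow> nat \<Rightarrow> (nat \<Rightarrow> bool list) set" where
  "FF N l = PiE {1..N} (\<lambda>_. LL l)"

lemma card_LL: "card (LL l) = 2 ^ l"
proof -
  have "LL l = {xs. set xs \<subseteq> UNIV \<and> length xs = l}" by (auto simp: LL_def)
  then show ?thesis using card_lists_length_eq[of "UNIV::bool set" l] by simp
qed

lemma finite_LL: "finite (LL l)"
  using card_LL[of l] card.infinite by fastforce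

lemma card_FF: "card (FF N l) = (2^l)^N"
  by (simp add: FF_def card_PiE card_LL)

lemma finite_FF: "finite (FF N l)"
  unfolding FF_def by (simp add: finite_PiE finite_LL)

lemma bad1:
  assumes "m \<in> {1..N}" "m' \<in> {1..N}" "m' \<noteq> m"
  shows "card {h\<in>FF N l. h m = h m'} \<le> (2^l)^(N-1)"
proof -
  let ?P = "PiE ({1..N}-{m}) (\<lambda>_. LL l)"
  have "inj_on (\<lambda>h. h(m:=undefined)) {h\<in>FF N l. h m = h m'}"
  proof (rule inj_onI)
    fix h g assume h: "h \<in> {h\<in>FF N l. h m = h m'}" and g: "g \<in> {h\<in>FF N l. h m = h m'}"
      and e: "h(m:=undefined) = g(m:=undefined)"
    have "h m' = g m'" using e assms(3) by (metis fun_upd_other)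
    then have "h m = g m" using h g by simp
    then show "h = g" using e by (metis fun_upd_triv fun_upd_upd)
  qed
  moreover have "(\<lambda>h. h(m:=undefined)) ` {h\<in>FF N l. h m = h m'} \<subseteq> ?P"
    by (auto simp: FF_def PiE_iff extensional_def split: if_splits)
  moreover have "finite ?P" by (simp add: finite_PiE finite_LL)
  ultimately have "card {h\<in>FF N l. h m = h m'} \<le> card ?P"
    by (meson card_inj_on_le)
  also have "card ?P = (2^l)^(N-1)"
    using assms(1) by (simp add: card_PiE card_LL)
  finally show ?thesis .
qed

lemma bad2:
  assumes "m \<in> {1..N}" "S \<subseteq> {1..N}" "m \<notin> S"
  shows "card {h\<in>FF N l. \<not> isolates h m S} \<le> card S * (2^l)^(N-1)"
proof -
  have "{h\<in>FF N l. \<not> isolates h m S} \<subseteq> (\<Union>m'\<in>S. {h\<in>FF N l. h m = h m'})"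
    by (auto simp: isolates_def)
  then have "card {h\<in>FF N l. \<not> isolates h m S} \<le> card (\<Union>m'\<in>S. {h\<in>FF N l. h m = h m'})"
    by (intro card_mono) (auto intro: finite_subset[OF _ finite_FF])
  also have "\<dots> \<le> (\<Sum>m'\<in>S. card {h\<in>FF N l. h m = h m'})"
    by (rule card_UN_le) (meson finite_atLeastAtMost finite_subset assms(2))
  also have "\<dots> \<le> (\<Sum>m'\<in>S. (2^l)^(N-1))"
    by (intro sum_mono bad1) (use assms in auto)
  finally show ?thesis by simp
qed

lemma bad3:
  assumes "m \<in> {1..N}" "S \<subseteq> {1..N}" "m \<notin> S" "card S \<le> 2^(l-1)" "l \<ge> 1"
  shows "2 * card {h\<in>FF N l. \<not> isolates h m S} \<le> card (FF N l)"
proof -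
  have e1: "(2::nat) * 2^(l-1) = 2^l" using assms(5) by (cases l) auto
  have e2: "(2::nat)^l * (2^l)^(N-1) = (2^l)^N" using assms(1) by (cases N) auto
  have "card {h\<in>FF N l. \<not> isolates h m S} \<le> card S * (2^l)^(N-1)"
    using bad2[OF assms(1-3)] .
  also have "\<dots> \<le> 2^(l-1) * (2^l)^(N-1)"
    using assms(4) by (rule mult_le_mono1)
  finally have "2 * card {h\<in>FF N l. \<not> isolates h m S} \<le> 2 * (2^(l-1) * (2^l)^(N-1))"
    by (rule mult_le_mono2)
  also have "\<dots> = (2 * 2^(l-1)) * (2^l)^(N-1)" by (rule mult.assoc[symmetric])
  also have "\<dots> = (2^l)^N" unfolding e1 e2 ..
  finally show ?thesis unfolding card_FF .
qed

lemma sum_pow_le: "(N::nat) \<ge> 2 \<Longrightarrow> (\<Sum>i\<le>k. N^i) \<le> 2 * N^k"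
proof (induction k)
  case 0 then show ?case by simp
next
  case (Suc k)
  have "(\<Sum>i\<le>Suc k. N^i) = (\<Sum>i\<le>k. N^i) + N^Suc k" by simp
  also have "\<dots> \<le> 2 * N^k + N^Suc k" using Suc by simp
  also have "2 * N^k \<le> N^Suc k" using Suc.prems by simp
  finally show ?case by simp
qed

lemma card_small_subsets:
  assumes "N \<ge> 2"
  shows "card {S. S \<subseteq> {1..N} \<and> card S \<le> k} \<le> 2 * N^k"
proof -
  have eq: "{S. S \<subseteq> {1..N} \<and> card S \<le> k} = (\<Union>i\<in>{..k}. {S. S \<subseteq> {1..N} \<and> card S = i})"
    by auto
  have "card (\<Union>i\<in>{..k}. {S. S \<subseteq> {1..N} \<and> card S = i}) \<le> (\<Sum>i\<le>k. card {S. S \<subseteq> {1..N} \<and> card S = i})"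
    by (rule card_UN_le) simp
  also have "\<dots> = (\<Sum>i\<le>k. N choose i)"
    using n_subsets[of "{1..N}"] by simp
  also have "\<dots> \<le> (\<Sum>i\<le>k. N^i)"
  proof (rule sum_mono)
    fix i assume "i \<in> {..k}"
    show "N choose i \<le> N^i"
      by (cases "i \<le> N") (auto simp: binomial_le_pow binomial_eq_0)
  qed
  also have "\<dots> \<le> 2 * N^k" using sum_pow_le assms by blast
  finally show ?thesis using eq by simp
qed

lemma exists_family:
  assumes l: "l \<ge> 1" and N: "N \<ge> 2" and big: "2 * N^(2^(l-1)+1) < 2^M"
  shows "\<exists>H. isolating_family N l M H"
proof -
  define k where "k = (2::nat)^(l-1)"
  define T where "T = PiE {1..M} (\<lambda>_. FF N l)"
  define P where "P = Sigma {1..N} (\<lambda>m. {S. S \<subseteq> {1..N}-{m} \<and> card S \<le> k})"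
  define Bad where "Bad = (\<lambda>p. {H \<in> T. \<forall>j\<in>{1..M}. \<not> isolates (H j) (fst p) (snd p)})"
  have finT: "finite T" unfolding T_def by (simp add: finite_PiE finite_FF)
  have cardT: "card T = card (FF N l) ^ M" unfolding T_def by (simp add: card_PiE)
  have cardT_pos: "card T > 0" unfolding cardT card_FF by simp
  have finP: "finite P" unfolding P_def by (intro finite_SigmaI) auto
  have "card P = (\<Sum>m\<in>{1..N}. card {S. S \<subseteq> {1..N}-{m} \<and> card S \<le> k})"
    unfolding P_def by (subst card_SigmaI) auto
  also have "\<dots> \<le> (\<Sum>m\<in>{1..N}. card {S. S \<subseteq> {1..N} \<and> card S \<le> k})"
    by (intro sum_mono card_mono) (auto intro: finite_subset[of _ "Pow {1..N}"])
  also have "\<dots> \<le> (\<Sum>m\<in>{1..N}. 2 * N^k)"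
    by (intro sum_mono card_small_subsets N)
  also have "\<dots> = 2 * N^(k+1)" by simp
  finally have cardP: "card P < 2^M" using big unfolding k_def by linarith
  have bad_card: "2^M * card (Bad p) \<le> card T" if "p \<in> P" for p
  proof -
    obtain m S where p: "p = (m,S)" by fastforce
    have m: "m \<in> {1..N}" and S: "S \<subseteq> {1..N}" "m \<notin> S" "card S \<le> 2^(l-1)"
      using that p k_def by (auto simp: P_def)
    have "Bad p = PiE {1..M} (\<lambda>_. {h\<in>FF N l. \<not> isolates h m S})"
      by (auto simp: Bad_def T_def p PiE_iff extensional_def)
    then have "card (Bad p) = card {h\<in>FF N l. \<not> isolates h m S} ^ M"
      by (simp add: card_PiE)
    then have "2^M * card (Bad p) = (2 * card {h\<in>FF N l. \<not> isolates h m S}) ^ M"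
      by (simp add: power_mult_distrib)
    also have "\<dots> \<le> card (FF N l) ^ M"
      by (intro power_mono bad3 m S l) auto
    finally show ?thesis using cardT by simp
  qed
  have "2^M * card (\<Union>p\<in>P. Bad p) \<le> 2^M * (\<Sum>p\<in>P. card (Bad p))"
    by (simp add: card_UN_le finP)
  also have "\<dots> = (\<Sum>p\<in>P. 2^M * card (Bad p))" by (simp add: sum_distrib_left)
  also have "\<dots> \<le> (\<Sum>p\<in>P. card T)" by (intro sum_mono bad_card)
  also have "\<dots> = card P * card T" by simp
  also have "\<dots> < 2^M * card T" using cardP cardT_pos by simp
  finally have "card (\<Union>p\<in>P. Bad p) < card T" by simp
  then have cardU: "card (\<Union>p\<in>P. Bad p) < card T" .
  have "\<not> T \<subseteq> (\<Union>p\<in>P. Bad p)"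
  proof
    assume "T \<subseteq> (\<Union>p\<in>P. Bad p)"
    moreover have "(\<Union>p\<in>P. Bad p) \<subseteq> T" by (auto simp: Bad_def)
    ultimately have "T = (\<Union>p\<in>P. Bad p)" by (rule subset_antisym)
    then show False using cardU by (metis less_irrefl)
  qed
  then obtain H where H: "H \<in> T" "H \<notin> (\<Union>p\<in>P. Bad p)" by blast
  have "isolating_family N l M H"
    unfolding isolating_family_def
  proof (intro conjI ballI allI impI)
    fix j assume "j \<in> {1..M}"
    then have "H j \<in> FF N l" using H(1) by (auto simp: T_def)
    then show "is_hash_fun N l (H j)"
      by (auto simp: FF_def is_hash_fun_def LL_def PiE_iff)
  next
    fix S m assume "S \<subseteq> {1..N}" "card S \<le> 2^(l-1)" "m \<in> {1..N} - S"
    then have "(m,S) \<in> P" by (auto simp: P_def k_def)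
    then have "H \<notin> Bad (m,S)" using H by blast
    then show "\<exists>j\<in>{1..M}. isolates (H j) m S" using H(1) by (auto simp: Bad_def)
  qed
  then show ?thesis by blast
qed

lemma bit_high: "(a::nat) < 2^M \<Longrightarrow> M \<le> n \<Longrightarrow> \<not> bit a n"
proof -
  assume "a < 2^M" "M \<le> n"
  then have "a < 2^n" by (meson less_le_trans one_le_numeral power_increasing)
  then show ?thesis by (simp add: bit_iff_odd)
qed

lemma case_l1:
  assumes N: "N \<ge> 2"
  shows "\<exists>M H. isolating_family N 1 M H \<and> real M \<le> 2 ^ 1 * log 2 (real N)"
proof -
  define y where "y = log 2 (real N)"
  have y1: "y \<ge> 1" unfolding y_def using N by simp
  define M where "M = nat \<lceil>y\<rceil>"
  have M1: "M \<ge> 1" unfolding M_def using y1 by linarith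
  have Mle: "real M \<le> 2 * y" unfolding M_def using y1 by linarith
  have "real N = 2 powr y" unfolding y_def using N by simp
  also have "\<dots> \<le> 2 powr (real M)" unfolding M_def using y1
    by (intro powr_mono) linarith+
  also have "\<dots> = real (2^M)" by (simp add: powr_realpow)
  finally have NM: "N \<le> 2^M" by linarith
  define H :: "nat \<Rightarrow> nat \<Rightarrow> bool list" where "H = (\<lambda>j x. [bit (x - 1) (j - 1)])"
  have "isolating_family N 1 M H"
    unfolding isolating_family_def
  proof (intro conjI ballI allI impI)
    fix j show "is_hash_fun N 1 (H j)" by (simp add: is_hash_fun_def H_def)
  next
    fix S m assume S: "S \<subseteq> {1..N}" "card S \<le> 2^(1-1)" and m: "m \<in> {1..N} - S"
    have finS: "finite S" using S(1) finite_subset by blast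
    have "S = {} \<or> (\<exists>m'. S = {m'})"
    proof (cases "S = {}")
    case False
    then obtain m' where "m' \<in> S" by blast
    moreover have "\<forall>a1\<in>S. \<forall>a2\<in>S. a1 = a2" using S(2) finS card_le_Suc0_iff_eq by auto
    ultimately have "S = {m'}" by blast
    then show ?thesis by blast
  qed simp
    then show "\<exists>j\<in>{1..M}. isolates (H j) m S"
    proof
      assume "S = {}" then show ?thesis using M1 by (auto simp: isolates_def)
    next
      assume "\<exists>m'. S = {m'}"
      then obtain m' where m': "S = {m'}" by blast
      have "m - 1 \<noteq> m' - 1" using m S(1) m' by auto
      then obtain n where n: "bit (m - 1) n \<noteq> bit (m' - 1) n" using bit_eq_iff by blast
      have "m - 1 < 2^M" "m' - 1 < 2^M" using m S(1) m' NM by auto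
      then have "n < M" using n bit_high not_le by metis
      then show ?thesis using n m' by (auto simp: isolates_def H_def intro!: bexI[of _ "Suc n"])
    qed
  qed
  then show ?thesis using Mle y_def by auto
qed

lemma case_small:
  assumes l: "l \<ge> 1" and N: "N \<ge> 2" and small: "N \<le> 2^l"
  shows "\<exists>M H. isolating_family N l M H \<and> real M \<le> 2 ^ l * log 2 (real N)"
proof -
  have "card {1..N} \<le> card (LL l)" using small by (simp add: card_LL)
  then obtain f where f: "f ` {1..N} \<subseteq> LL l" "inj_on f {1..N}"
    using card_le_inj[of "{1..N}" "LL l"] finite_LL by auto
  have "isolating_family N l 1 (\<lambda>_. f)"
    unfolding isolating_family_def
  proof (intro conjI ballI allI impI)
    fix j show "is_hash_fun N l f" using f(1) by (auto simp: is_hash_fun_def LL_def)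
  next
    fix S m assume S: "S \<subseteq> {1..N}" "card S \<le> 2^(l-1)" and m: "m \<in> {1..N} - S"
    have "isolates f m S" unfolding isolates_def
      using f(2) S(1) m by (auto dest: inj_onD)
    then show "\<exists>j\<in>{1..1::nat}. isolates f m S" by auto
  qed
  moreover have "1 \<le> (2::real)^l * log 2 (real N)"
  proof -
    have "log 2 (real N) \<ge> 1" using N by simp
    moreover have "(2::real)^l \<ge> 1" by simp
    ultimately show ?thesis by (metis mult_ge1_I)
  qed
  ultimately show ?thesis by (intro exI[of _ 1]) auto
qed

lemma case_big:
  assumes l: "l \<ge> 2" and big: "N > 2^l"
  shows "\<exists>M H. isolating_family N l M H \<and> real M \<le> 2 ^ l * log 2 (real N)"
proof -
  define k where "k = (2::nat)^(l-1)"
  have "(2::nat)^1 \<le> 2^(l-1)" by (rule power_increasing) (use l in auto)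
  then have k2: "k \<ge> 2" unfolding k_def by simp
  have lk: "(2::nat)^l = 2*k" unfolding k_def using l by (cases l) auto
  have N4: "N \<ge> 4" using big k2 lk by linarith
  define x where "x = 2^l * log 2 (real N)"
  have x0: "x \<ge> 0" unfolding x_def using N4 by simp
  define M where "M = nat \<lfloor>x\<rfloor>"
  have Mle: "real M \<le> x" unfolding M_def using x0 by linarith
  have Mgt: "real M > x - 1" unfolding M_def using x0 by linarith
  have "2 powr x = (2 powr log 2 (real N)) powr (2^l)"
    unfolding x_def by (simp add: powr_powr mult.commute)
  also have "\<dots> = real N ^ (2^l)" using N4 powr_realpow[of "real N" "2^l"] by simp
  finally have px: "2 powr x = real (N^(2*k))" using lk by simp
  have "2*k = (k+1)+(k-1)" using k2 by simp
  then have "N^(2*k) = N^(k+1) * N^(k-1)" by (metis power_add)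
  moreover have "N^1 \<le> N^(k-1)" by (rule power_increasing) (use N4 k2 in auto)
  then have "N^(k-1) \<ge> 4" using N4 by simp
  ultimately have "4 * N^(k+1) \<le> N^(2*k)" by simp
  then have "real (4 * N^(k+1)) \<le> 2 powr x" using px by linarith
  also have "2 powr x = 2 * 2 powr (x - 1)" by (simp add: powr_diff)
  also have "2 powr (x - 1) < 2 powr (real M)" using Mgt by simp
  also have "2 powr (real M) = real (2^M)" by (simp add: powr_realpow)
  finally have "2 * N^(2^(l-1)+1) < 2^M" unfolding k_def by linarith
  then obtain H where "isolating_family N l M H"
    using exists_family[of l N M] l N4 by auto
  then show ?thesis using Mle x_def by auto
qed

theorem mainTheorem10:
  fixes l N :: nat
  assumes "l \<ge> 1" and "N \<ge> 2"
  shows "\<exists>M H. isolating_family N l M H \<and> real M \<le> 2 ^ l * log 2 (real N)"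
proof (cases "N \<le> 2^l")
  case True then show ?thesis using case_small assms by blast
next
  case False
  show ?thesis
  proof (cases "l = 1")
    case True then show ?thesis using case_l1 assms by simp
  next
    case False2: False
    then show ?thesis using case_big[of l N] assms False by simp
  qed
qed

end
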